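(* Let $(\mathcal{F}_n)_{n=0}^\infty$ be a sequence of regular families such that $\mathcal{F}_0$ contains all singleton subsets of $\mathbb{N}$, and let $(\theta_n)_{n=1}^\infty$ be a nonincreasing null sequence in $(0,1)$. Choose a strictly increasing sequence of integers $(m_k)_{k=0}^\infty$ with $m_0=0$ and $\theta_{m_{k+1}}\le \frac12\theta_{m_k}$ for all $k\in\mathbb{N}$. For $n\in\mathbb{N}$ with $m_{k-1}<n\le m_k$, let $\mathcal{G}_n=\{F\in\mathcal{F}_n : k\le F\}\cup\mathcal{S}_0$. Then $T(\mathcal{F}_0,(\theta_n,\mathcal{F}_n)_{n=1}^\infty)$ is isomorphic to $T(\mathcal{F}_0,(\theta_n,\mathcal{G}_n)_{n=1}^\infty)$ via the formal identity (i.e. the two norms are equivalent on $c_{00}$).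
   Context: $[\mathbb{N}]^{<\infty}$ denotes the set of finite subsets of $\mathbb{N}$, topologized as a subspace of $2^{\mathbb{N}}$ with the product topology. For finite $E,F\subseteq\mathbb{N}$, $E<F$ means $\max E<\min F$ and $E\le F$ means $\max E\le\min F$ (with $\max\emptyset=0$, $\min\emptyset=\infty$); $k\le F$ abbreviates $\{k\}\le F$. A family $\mathcal{F}\subseteq[\mathbb{N}]^{<\infty}$ is regular if it is hereditary ($G\subseteq F\in\mathcal{F}\Rightarrow G\in\mathcal{F}$), spreading (if $\{n_1<\dots<n_k\}\in\mathcal{F}$ and $m_1<\dots<m_k$ with $m_i\ge n_i$ for all $i$, then $\{m_1,\dots,m_k\}\in\mathcal{F}$), and compact. $\mathcal{S}_0=\{\{n\}:n\in\mathbb{N}\}\cup\{\emptyset\}$. $c_{00}$ is the space of finitely supported real sequences with unit vectors $(e_k)$; for $x=\sum a_ke_k$ and finite $E$, $Ex=\sum_{k\in E}a_ke_k$, and for a regular $\mathcal{F}$, $\|x\|_{\mathcal{F}}=\sup_{F\in\mathcal{F}}\sum_{k\in F}|a_k|$. A sequence $E_1<\dots<E_k$ of finite sets is $\mathcal{F}$-admissible if $\{\min E_1,\dots,\min E_k\}\in\mathcal{F}$. Given regular families $(\mathcal{F}_n)_{n\ge0}$ with $\mathcal{F}_0$ containing all singletons and a nonincreasing null sequence $(\theta_n)_{n\ge1}$ in $(0,1)$, the mixed Tsirelson space $T(\mathcal{F}_0,(\theta_n,\mathcal{F}_n)_{n=1}^\infty)$ is the completion of $c_{00}$ under the norm implicitly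 defined by $\|x\|=\max\{\|x\|_{\mathcal{F}_0},\ \sup_{n\in\mathbb{N}}\sup\theta_n\sum_{i=1}^k\|E_ix\|\}$, the inner supremum over all $\mathcal{F}_n$-admissible sequences $(E_i)_{i=1}^k$. *)

theory Defs
  imports "HOL-Analysis.Analysis"
begin

text \<open>Families of finite subsets of nat; the paper's [N]^{<infinity} is viewed as a
subspace of 2^N, identified with nat \<Rightarrow> bool carrying the product of discrete topologies.\<close>

definition hereditary :: "nat set set \<Rightarrow> bool" where
  "hereditary \<F> \<longleftrightarrow> (\<forall>F G. F \<in> \<F> \<longrightarrow> G \<subseteq> F \<longrightarrow> G \<in> \<F>)"

definition spreading :: "nat set set \<Rightarrow> bool" where
  "spreading \<F> \<longleftrightarrow> (\<forall>ns ms. sorted_wrt (<) ns \<longrightarrow> sorted_wrt (<) ms \<longrightarrow>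
      length ns = length ms \<longrightarrow> (\<forall>i<length ns. ns ! i \<le> ms ! i) \<longrightarrow>
      set ns \<in> \<F> \<longrightarrow> set ms \<in> \<F>)"

definition compact_family :: "nat set set \<Rightarrow> bool" where
  "compact_family \<F> \<longleftrightarrow>
     compactin (product_topology (\<lambda>_::nat. discrete_topology (UNIV::bool set)) UNIV)
               ((\<lambda>F n. n \<in> F) ` \<F>)"

definition regular_family :: "nat set set \<Rightarrow> bool" where
  "regular_family \<F> \<longleftrightarrow> (\<forall>F\<in>\<F>. finite F) \<and> hereditary \<F> \<and> spreading \<F> \<and> compact_family \<F>"

definition S0 :: "nat set set" where
  "S0 = {{n} | n. True} \<union> {{}}"

definition c00 :: "(nat \<Rightarrow> real) set" where
  "c00 = {x. finite {k. x k \<noteq> 0}}"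

definition restr :: "nat set \<Rightarrow> (nat \<Rightarrow> real) \<Rightarrow> nat \<Rightarrow> real" where
  "restr E x = (\<lambda>k. if k \<in> E then x k else 0)"

definition fam_norm :: "nat set set \<Rightarrow> (nat \<Rightarrow> real) \<Rightarrow> real" where
  "fam_norm \<F> x = Sup (insert 0 ((\<lambda>F. \<Sum>k\<in>F. \<bar>x k\<bar>) ` \<F>))"

text \<open>An F-admissible sequence E_1 < ... < E_k of finite (nonempty) sets, as a list.
Empty sets contribute nothing to the norm, so they are omitted.\<close>
definition admissible :: "nat set set \<Rightarrow> nat set list \<Rightarrow> bool" where
  "admissible \<F> Es \<longleftrightarrow> (\<forall>E\<in>set Es. finite E \<and> E \<noteq> {}) \<and>
     sorted_wrt (\<lambda>A B. Max A < Min B) Es \<and> set (map Min Es) \<in> \<F>"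

text \<open>The implicitly defined mixed Tsirelson norm, realized in the standard way as the
supremum of the increasing iterates (the least solution of the implicit equation).\<close>
fun mt_iter :: "nat set set \<Rightarrow> (nat \<Rightarrow> real) \<Rightarrow> (nat \<Rightarrow> nat set set) \<Rightarrow> nat \<Rightarrow>
                 (nat \<Rightarrow> real) \<Rightarrow> real" where
  "mt_iter F0 \<theta> Fs 0 x = 0"
| "mt_iter F0 \<theta> Fs (Suc j) x =
     max (fam_norm F0 x)
         (Sup (insert 0 {\<theta> n * (\<Sum>E\<leftarrow>Es. mt_iter F0 \<theta> Fs j (restr E x)) | n Es.
                          n \<ge> 1 \<and> admissible (Fs n) Es}))"

definition mt_norm :: "nat set set \<Rightarrow> (nat \<Rightarrow> real) \<Rightarrow> (nat \<Rightarrow> nat set set) \<Rightarrow>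
                        (nat \<Rightarrow> real) \<Rightarrow> real" where
  "mt_norm F0 \<theta> Fs x = (SUP j. mt_iter F0 \<theta> Fs j x)"

text \<open>For n \<ge> 1, the unique k \<ge> 1 with m (k-1) < n \<le> m k.\<close>
definition block_index :: "(nat \<Rightarrow> nat) \<Rightarrow> nat \<Rightarrow> nat" where
  "block_index m n = (LEAST k. n \<le> m k)"

definition G_fam :: "(nat \<Rightarrow> nat set set) \<Rightarrow> (nat \<Rightarrow> nat) \<Rightarrow> nat \<Rightarrow> nat set set" where
  "G_fam Fs m n = {F \<in> Fs n. \<forall>i\<in>F. block_index m n \<le> i} \<union> S0"

end

theory Submission imports Defs begin

definition supp :: "(nat \<Rightarrow> real) \<Rightarrow> nat set" where "supp x = {k. x k \<noteq> 0}"
definition wsum :: "(nat \<Rightarrow> real) \<Rightarrow> (nat \<Rightarrow> real) \<Rightarrow> real" where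
  "wsum a x = (\<Sum>k\<in>supp x. a k * \<bar>x k\<bar>)"

lemma c00_iff: "x \<in> c00 \<longleftrightarrow> finite (supp x)" by (simp add: c00_def supp_def)

lemma wsum_eq: assumes "finite S" "supp x \<subseteq> S" shows "wsum a x = (\<Sum>k\<in>S. a k * \<bar>x k\<bar>)"
  unfolding wsum_def by (rule sum.mono_neutral_left) (use assms in \<open>auto simp: supp_def\<close>)

lemma supp_restr: "supp (restr E x) = supp x \<inter> E" by (auto simp: supp_def restr_def)
lemma restr_c00: "x \<in> c00 \<Longrightarrow> restr E x \<in> c00" by (auto simp: c00_iff supp_restr)
lemma add_c00: "x \<in> c00 \<Longrightarrow> y \<in> c00 \<Longrightarrow> (\<lambda>k. x k + y k) \<in> c00"
  unfolding c00_iff supp_def by (rule finite_subset[of _ "{k. x k \<noteq> 0} \<union> {k. y k \<noteq> 0}"]) auto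

lemma wsum_restr: assumes "finite S" "supp x \<subseteq> S"
  shows "wsum a (restr E x) = (\<Sum>k\<in>S\<inter>E. a k * \<bar>x k\<bar>)"
proof -
  have "wsum a (restr E x) = (\<Sum>k\<in>S. a k * \<bar>restr E x k\<bar>)"
    using assms by (intro wsum_eq) (auto simp: supp_restr)
  also have "\<dots> = (\<Sum>k\<in>S\<inter>E. a k * \<bar>x k\<bar>)"
    using assms(1) by (simp add: sum.inter_restrict restr_def) (rule sum.cong, auto)
  finally show ?thesis .
qed

lemma wsum_nonneg: "(\<And>k. 0 \<le> a k) \<Longrightarrow> 0 \<le> wsum a x" by (simp add: wsum_def sum_nonneg)
lemma wsum_zero: "wsum a (\<lambda>_. 0) = 0" by (simp add: wsum_def supp_def)
lemma restr_restr: "restr A (restr E x) = restr E (restr A x)" by (auto simp: restr_def)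
lemma restr_add: "restr A (\<lambda>k. x k + y k) = (\<lambda>k. restr A x k + restr A y k)" by (auto simp: restr_def)
lemma restr_empty: "restr {} x = (\<lambda>_. 0)" by (simp add: restr_def)
lemma restr_split: "restr E x = (\<lambda>k. restr (E \<inter> {..<c}) x k + restr (E \<inter> {c..}) x k)"
  by (auto simp: restr_def)

lemma sum_list_disj:
  assumes "finite S" "sorted_wrt (\<lambda>A B. A \<inter> B = {}) Es"
  shows "(\<Sum>E\<leftarrow>Es. \<Sum>k\<in>S\<inter>E. h k) = (\<Sum>k\<in>S \<inter> \<Union>(set Es). h k)"
using assms(2) proof (induction Es)
  case Nil then show ?case by simp
next
  case (Cons E0 Es)
  have d: "(S\<inter>E0) \<inter> (S \<inter> \<Union>(set Es)) = {}" using Cons.prems by auto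
  have "(\<Sum>E\<leftarrow>E0#Es. \<Sum>k\<in>S\<inter>E. h k) = (\<Sum>k\<in>S\<inter>E0. h k) + (\<Sum>k\<in>S \<inter> \<Union>(set Es). h k)"
    using Cons by simp
  also have "\<dots> = (\<Sum>k\<in>(S\<inter>E0) \<union> (S \<inter> \<Union>(set Es)). h k)"
    using d assms(1) by (simp add: sum.union_disjoint)
  also have "(S\<inter>E0) \<union> (S \<inter> \<Union>(set Es)) = S \<inter> \<Union>(set (E0#Es))" by auto
  finally show ?case .
qed

lemma sum_list_disj_le:
  fixes h :: "nat \<Rightarrow> real"
  assumes "finite S" "sorted_wrt (\<lambda>A B. A \<inter> B = {}) Es" "\<Union>(set Es) \<subseteq> T" "\<And>k. 0 \<le> h k"
  shows "(\<Sum>E\<leftarrow>Es. \<Sum>k\<in>S\<inter>E. h k) \<le> (\<Sum>k\<in>S \<inter> T. h k)"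
  unfolding sum_list_disj[OF assms(1,2)]
  by (rule sum_mono2) (use assms in auto)

lemma adm_disj:
  assumes "\<forall>E\<in>set Es. finite E \<and> E \<noteq> {}" "sorted_wrt (\<lambda>A B. Max A < Min B) Es"
  shows "sorted_wrt (\<lambda>A B. A \<inter> B = {}) Es"
proof (rule sorted_wrt_mono_rel[OF _ assms(2)])
  fix A B assume "A \<in> set Es" "B \<in> set Es" "Max A < Min B"
  then show "A \<inter> B = {}" using assms(1)
    by (metis Max_ge Min_le disjoint_iff leD order_le_less_trans)
qed

lemma sum_list_filter0:
  assumes "\<forall>x\<in>set xs. \<not> P x \<longrightarrow> f x = (0::real)"
  shows "(\<Sum>x\<leftarrow>xs. f x) = (\<Sum>x\<leftarrow>filter P xs. f x)"
  using assms by (induction xs) auto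

lemma S0_list:
  assumes "set (map Min Es) \<in> S0" "\<forall>E\<in>set Es. finite E \<and> E \<noteq> {}"
    "sorted_wrt (\<lambda>A B. Max A < Min B) Es"
  shows "Es = [] \<or> (\<exists>E. Es = [E])"
proof (cases Es)
  case (Cons A rest)
  show ?thesis
  proof (cases rest)
    case (Cons B rest')
    have "Min A \<le> Max A" using assms(2) Cons \<open>Es = A # rest\<close> by (metis Max_ge Min_in list.set_intros(1))
    moreover have "Max A < Min B" using assms(3) Cons \<open>Es = A # rest\<close> by simp
    ultimately have "Min A \<noteq> Min B" by simp
    moreover obtain X where "X \<in> S0" "X = insert (Min A) (insert (Min B) (set (map Min rest')))"
      using assms(1) Cons \<open>Es = A # rest\<close> by simp
    ultimately show ?thesis by (auto simp: S0_def doubleton_eq_iff)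
  qed (use Cons in auto)
qed auto

lemma fam_sum_le: assumes "finite F" "x \<in> c00" shows "(\<Sum>k\<in>F. \<bar>x k\<bar>) \<le> wsum (\<lambda>_. 1) x"
proof -
  have "wsum (\<lambda>_. 1) x = (\<Sum>k\<in>F \<union> supp x. \<bar>x k\<bar>)"
    using assms by (subst wsum_eq[of "F \<union> supp x"]) (auto simp: c00_iff)
  also have "\<dots> \<ge> (\<Sum>k\<in>F. \<bar>x k\<bar>)" using assms by (intro sum_mono2) (auto simp: c00_iff)
  finally show ?thesis .
qed

lemma fam_bdd: "\<forall>F\<in>F0. finite F \<Longrightarrow> x \<in> c00 \<Longrightarrow>
   bdd_above ((\<lambda>F. \<Sum>k\<in>F. \<bar>x k\<bar>) ` F0)"
  by (rule bdd_aboveI[of _ "wsum (\<lambda>_. 1) x"]) (auto intro: fam_sum_le wsum_nonneg)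

lemma fam_ge: "\<forall>F\<in>F0. finite F \<Longrightarrow> x \<in> c00 \<Longrightarrow> F \<in> F0 \<Longrightarrow> (\<Sum>k\<in>F. \<bar>x k\<bar>) \<le> fam_norm F0 x"
  unfolding fam_norm_def by (rule cSup_upper) (auto intro: fam_bdd)

lemma fam_nonneg: "\<forall>F\<in>F0. finite F \<Longrightarrow> x \<in> c00 \<Longrightarrow> 0 \<le> fam_norm F0 x"
  unfolding fam_norm_def by (rule cSup_upper) (auto intro: fam_bdd)

lemma fam_le_B: "(\<And>F. F \<in> F0 \<Longrightarrow> (\<Sum>k\<in>F. \<bar>x k\<bar>) \<le> B) \<Longrightarrow> 0 \<le> B \<Longrightarrow> fam_norm F0 x \<le> B"
  unfolding fam_norm_def by (rule cSup_least) auto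

lemma fam_le_l1: "\<forall>F\<in>F0. finite F \<Longrightarrow> x \<in> c00 \<Longrightarrow> fam_norm F0 x \<le> wsum (\<lambda>_. 1) x"
  by (rule fam_le_B) (auto intro: fam_sum_le wsum_nonneg)

lemma fam_restr: "\<forall>F\<in>F0. finite F \<Longrightarrow> x \<in> c00 \<Longrightarrow> fam_norm F0 (restr E x) \<le> fam_norm F0 x"
proof (rule fam_le_B)
  fix F assume "\<forall>F\<in>F0. finite F" "x \<in> c00" "F \<in> F0"
  then have "(\<Sum>k\<in>F. \<bar>restr E x k\<bar>) \<le> (\<Sum>k\<in>F. \<bar>x k\<bar>)" by (intro sum_mono) (auto simp: restr_def)
  also have "\<dots> \<le> fam_norm F0 x" by (rule fam_ge) fact+
  finally show "(\<Sum>k\<in>F. \<bar>restr E x k\<bar>) \<le> fam_norm F0 x" .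
qed (rule fam_nonneg)

lemma fam_add: assumes "\<forall>F\<in>F0. finite F" "x \<in> c00" "y \<in> c00"
  shows "fam_norm F0 (\<lambda>k. x k + y k) \<le> fam_norm F0 x + fam_norm F0 y"
proof (rule fam_le_B)
  fix F assume "F \<in> F0"
  have "(\<Sum>k\<in>F. \<bar>x k + y k\<bar>) \<le> (\<Sum>k\<in>F. \<bar>x k\<bar>) + (\<Sum>k\<in>F. \<bar>y k\<bar>)"
    by (simp add: sum.distrib[symmetric] sum_mono abs_triangle_ineq)
  also have "\<dots> \<le> fam_norm F0 x + fam_norm F0 y"
    using fam_ge[OF assms(1,2) \<open>F \<in> F0\<close>] fam_ge[OF assms(1,3) \<open>F \<in> F0\<close>] by linarith
  finally show "(\<Sum>k\<in>F. \<bar>x k + y k\<bar>) \<le> fam_norm F0 x + fam_norm F0 y" .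
qed (use fam_nonneg[OF assms(1,2)] fam_nonneg[OF assms(1,3)] in linarith)

lemma fam_single: "\<forall>F\<in>F0. finite F \<Longrightarrow> x \<in> c00 \<Longrightarrow> {k} \<in> F0 \<Longrightarrow> \<bar>x k\<bar> \<le> fam_norm F0 x"
  using fam_ge[of F0 x "{k}"] by simp


definition Tset where
  "Tset F0 \<theta> Fs j x = {\<theta> n * (\<Sum>E\<leftarrow>Es. mt_iter F0 \<theta> Fs j (restr E x)) | n Es.
                          n \<ge> 1 \<and> admissible (Fs n) Es}"

lemma mt_Suc: "mt_iter F0 \<theta> Fs (Suc j) x = max (fam_norm F0 x) (Sup (insert 0 (Tset F0 \<theta> Fs j x)))"
  by (simp add: Tset_def)

declare mt_iter.simps(2)[simp del]

lemma adm_props: "admissible F Es \<Longrightarrow> (\<forall>E\<in>set Es. finite E \<and> E \<noteq> {}) \<and>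
     sorted_wrt (\<lambda>A B. Max A < Min B) Es \<and> set (map Min Es) \<in> F"
  by (simp add: admissible_def)

context
  fixes F0 :: "nat set set" and \<theta> :: "nat \<Rightarrow> real" and Fs :: "nat \<Rightarrow> nat set set"
  assumes fin0: "\<forall>F\<in>F0. finite F" and th: "\<And>n. 1 \<le> n \<Longrightarrow> 0 \<le> \<theta> n \<and> \<theta> n \<le> 1"
begin

lemma adm_elem_le:
  assumes x: "x \<in> c00" and b: "\<And>y. y \<in> c00 \<Longrightarrow> 0 \<le> mt_iter F0 \<theta> Fs j y \<and> mt_iter F0 \<theta> Fs j y \<le> wsum (\<lambda>_. 1) y"
    and n: "1 \<le> n" and adm: "admissible (Fs n) Es"
  shows "\<theta> n * (\<Sum>E\<leftarrow>Es. mt_iter F0 \<theta> Fs j (restr E x)) \<le> wsum (\<lambda>_. 1) x"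
proof -
  define S where "S = supp x"
  have S: "finite S" "supp x \<subseteq> S" using x by (auto simp: S_def c00_iff)
  have dis: "sorted_wrt (\<lambda>A B. A \<inter> B = {}) Es" using adm_props[OF adm] adm_disj by blast
  have "(\<Sum>E\<leftarrow>Es. mt_iter F0 \<theta> Fs j (restr E x)) \<le> (\<Sum>E\<leftarrow>Es. \<Sum>k\<in>S\<inter>E. \<bar>x k\<bar>)"
    by (rule sum_list_mono) (use b[OF restr_c00[OF x]] wsum_restr[OF S] in auto)
  also have "\<dots> \<le> (\<Sum>k\<in>S\<inter>UNIV. \<bar>x k\<bar>)" by (rule sum_list_disj_le[OF S(1) dis]) auto
  also have "\<dots> = wsum (\<lambda>_. 1) x" using wsum_eq[OF S] by simp
  finally have A: "(\<Sum>E\<leftarrow>Es. mt_iter F0 \<theta> Fs j (restr E x)) \<le> wsum (\<lambda>_. 1) x" .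
  have "0 \<le> (\<Sum>E\<leftarrow>Es. mt_iter F0 \<theta> Fs j (restr E x))"
    by (rule sum_list_nonneg) (use b[OF restr_c00[OF x]] in auto)
  with A th[OF n] show ?thesis by (meson mult_left_le_one_le order_trans)
qed

lemma mt_bound: "x \<in> c00 \<Longrightarrow> 0 \<le> mt_iter F0 \<theta> Fs j x \<and> mt_iter F0 \<theta> Fs j x \<le> wsum (\<lambda>_. 1) x"
proof (induction j arbitrary: x)
  case 0 show ?case by (simp add: wsum_nonneg)
next
  case (Suc j)
  have "Sup (insert 0 (Tset F0 \<theta> Fs j x)) \<le> wsum (\<lambda>_. 1) x"
    by (rule cSup_least) (auto simp: Tset_def intro!: adm_elem_le Suc wsum_nonneg)
  moreover have "fam_norm F0 x \<le> wsum (\<lambda>_. 1) x" by (rule fam_le_l1[OF fin0 Suc.prems])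
  moreover have "0 \<le> fam_norm F0 x" by (rule fam_nonneg[OF fin0 Suc.prems])
  ultimately show ?case by (simp add: mt_Suc)
qed

lemma mt_nonneg: "x \<in> c00 \<Longrightarrow> 0 \<le> mt_iter F0 \<theta> Fs j x" using mt_bound by blast

lemma mt_zero: "mt_iter F0 \<theta> Fs j (\<lambda>_. 0) = 0"
proof -
  have "(\<lambda>_. 0::real) \<in> c00" by (simp add: c00_def)
  then show ?thesis using mt_bound[of "\<lambda>_. 0" j] by (simp add: wsum_zero)
qed

lemma Tset_bdd: "x \<in> c00 \<Longrightarrow> bdd_above (insert 0 (Tset F0 \<theta> Fs j x))"
  by (rule bdd_aboveI[of _ "wsum (\<lambda>_. 1) x"])
     (auto simp: Tset_def intro!: adm_elem_le mt_bound wsum_nonneg)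

lemma elem_le_Suc:
  assumes "x \<in> c00" "1 \<le> n" "admissible (Fs n) Es"
  shows "\<theta> n * (\<Sum>E\<leftarrow>Es. mt_iter F0 \<theta> Fs j (restr E x)) \<le> mt_iter F0 \<theta> Fs (Suc j) x"
proof -
  have "\<theta> n * (\<Sum>E\<leftarrow>Es. mt_iter F0 \<theta> Fs j (restr E x)) \<in> insert 0 (Tset F0 \<theta> Fs j x)"
    using assms by (auto simp: Tset_def)
  then have "\<theta> n * (\<Sum>E\<leftarrow>Es. mt_iter F0 \<theta> Fs j (restr E x)) \<le> Sup (insert 0 (Tset F0 \<theta> Fs j x))"
    using Tset_bdd[OF assms(1)] by (rule cSup_upper)
  then show ?thesis by (simp add: mt_Suc)
qed

lemma mt_Suc_le:
  assumes "fam_norm F0 x \<le> B" "0 \<le> B"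
    "\<And>n Es. 1 \<le> n \<Longrightarrow> admissible (Fs n) Es \<Longrightarrow> \<theta> n * (\<Sum>E\<leftarrow>Es. mt_iter F0 \<theta> Fs j (restr E x)) \<le> B"
  shows "mt_iter F0 \<theta> Fs (Suc j) x \<le> B"
proof -
  have "Sup (insert 0 (Tset F0 \<theta> Fs j x)) \<le> B"
    by (rule cSup_least) (use assms in \<open>auto simp: Tset_def\<close>)
  then show ?thesis using assms(1) by (simp add: mt_Suc)
qed

lemma fam_le_mt: "fam_norm F0 x \<le> mt_iter F0 \<theta> Fs (Suc j) x" by (simp add: mt_Suc)

lemma mt_mono: "x \<in> c00 \<Longrightarrow> mt_iter F0 \<theta> Fs j x \<le> mt_iter F0 \<theta> Fs (Suc j) x"
proof (induction j arbitrary: x)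
  case 0 then show ?case using mt_nonneg[of x 1] by simp
next
  case (Suc j)
  show ?case
  proof (rule mt_Suc_le)
    show "fam_norm F0 x \<le> mt_iter F0 \<theta> Fs (Suc (Suc j)) x" by (rule fam_le_mt)
    show "0 \<le> mt_iter F0 \<theta> Fs (Suc (Suc j)) x" by (rule mt_nonneg[OF Suc.prems])
    fix n Es assume n: "1 \<le> n" and adm: "admissible (Fs n) Es"
    have "\<theta> n * (\<Sum>E\<leftarrow>Es. mt_iter F0 \<theta> Fs j (restr E x)) \<le> \<theta> n * (\<Sum>E\<leftarrow>Es. mt_iter F0 \<theta> Fs (Suc j) (restr E x))"
      using th[OF n] by (intro mult_left_mono sum_list_mono Suc.IH restr_c00 Suc.prems) auto
    also have "\<dots> \<le> mt_iter F0 \<theta> Fs (Suc (Suc j)) x" by (rule elem_le_Suc[OF Suc.prems n adm])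
    finally show "\<theta> n * (\<Sum>E\<leftarrow>Es. mt_iter F0 \<theta> Fs j (restr E x)) \<le> mt_iter F0 \<theta> Fs (Suc (Suc j)) x" .
  qed
qed

lemma mt_restr: "x \<in> c00 \<Longrightarrow> mt_iter F0 \<theta> Fs j (restr E x) \<le> mt_iter F0 \<theta> Fs j x"
proof (induction j arbitrary: x E)
  case 0 then show ?case by simp
next
  case (Suc j)
  show ?case
  proof (rule mt_Suc_le)
    show "fam_norm F0 (restr E x) \<le> mt_iter F0 \<theta> Fs (Suc j) x"
      using fam_restr[OF fin0 Suc.prems, of E] fam_le_mt[of x j] by linarith
    show "0 \<le> mt_iter F0 \<theta> Fs (Suc j) x" by (rule mt_nonneg[OF Suc.prems])
    fix n Es assume n: "1 \<le> n" and adm: "admissible (Fs n) Es"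
    have "\<theta> n * (\<Sum>A\<leftarrow>Es. mt_iter F0 \<theta> Fs j (restr A (restr E x))) \<le> \<theta> n * (\<Sum>A\<leftarrow>Es. mt_iter F0 \<theta> Fs j (restr A x))"
      using th[OF n] by (intro mult_left_mono sum_list_mono) (auto, metis restr_restr Suc.IH restr_c00 Suc.prems)
    also have "\<dots> \<le> mt_iter F0 \<theta> Fs (Suc j) x" by (rule elem_le_Suc[OF Suc.prems n adm])
    finally show "\<theta> n * (\<Sum>A\<leftarrow>Es. mt_iter F0 \<theta> Fs j (restr A (restr E x))) \<le> mt_iter F0 \<theta> Fs (Suc j) x" .
  qed
qed

lemma mt_add: "x \<in> c00 \<Longrightarrow> y \<in> c00 \<Longrightarrow>
   mt_iter F0 \<theta> Fs j (\<lambda>k. x k + y k) \<le> mt_iter F0 \<theta> Fs j x + mt_iter F0 \<theta> Fs j y"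
proof (induction j arbitrary: x y)
  case 0 then show ?case by simp
next
  case (Suc j)
  show ?case
  proof (rule mt_Suc_le)
    show "fam_norm F0 (\<lambda>k. x k + y k) \<le> mt_iter F0 \<theta> Fs (Suc j) x + mt_iter F0 \<theta> Fs (Suc j) y"
      using fam_add[OF fin0 Suc.prems] fam_le_mt[of x j] fam_le_mt[of y j] by linarith
    show "0 \<le> mt_iter F0 \<theta> Fs (Suc j) x + mt_iter F0 \<theta> Fs (Suc j) y"
      using mt_nonneg[OF Suc.prems(1)] mt_nonneg[OF Suc.prems(2)] by (meson add_nonneg_nonneg)
    fix n Es assume n: "1 \<le> n" and adm: "admissible (Fs n) Es"
    have "\<theta> n * (\<Sum>A\<leftarrow>Es. mt_iter F0 \<theta> Fs j (restr A (\<lambda>k. x k + y k)))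
       \<le> \<theta> n * (\<Sum>A\<leftarrow>Es. mt_iter F0 \<theta> Fs j (restr A x) + mt_iter F0 \<theta> Fs j (restr A y))"
      using th[OF n] by (intro mult_left_mono sum_list_mono) (auto simp: restr_add intro!: Suc.IH restr_c00 Suc.prems)
    also have "\<dots> = \<theta> n * (\<Sum>A\<leftarrow>Es. mt_iter F0 \<theta> Fs j (restr A x)) + \<theta> n * (\<Sum>A\<leftarrow>Es. mt_iter F0 \<theta> Fs j (restr A y))"
      by (simp add: sum_list_addf distrib_left)
    also have "\<dots> \<le> mt_iter F0 \<theta> Fs (Suc j) x + mt_iter F0 \<theta> Fs (Suc j) y"
      by (intro add_mono elem_le_Suc Suc.prems n adm)
    finally show "\<theta> n * (\<Sum>A\<leftarrow>Es. mt_iter F0 \<theta> Fs j (restr A (\<lambda>k. x k + y k))) \<le> mt_iter F0 \<theta> Fs (Suc j) x + mt_iter F0 \<theta> Fs (Suc j) y" .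
  qed
qed

end


context
  fixes Fs :: "nat \<Rightarrow> nat set set" and \<theta> :: "nat \<Rightarrow> real" and m :: "nat \<Rightarrow> nat"
  assumes reg: "\<And>n. regular_family (Fs n)"
    and sing: "\<And>k. {k} \<in> Fs 0"
    and theta_range: "\<And>n. n \<ge> 1 \<Longrightarrow> 0 < \<theta> n \<and> \<theta> n < 1"
    and theta_noninc: "\<And>n. n \<ge> 1 \<Longrightarrow> \<theta> (Suc n) \<le> \<theta> n"
    and m_mono: "strict_mono m"
    and m0: "m 0 = 0"
    and m_theta: "\<And>k. k \<ge> 1 \<Longrightarrow> \<theta> (m (Suc k)) \<le> \<theta> (m k) / 2"
begin

lemma fin0': "\<forall>F\<in>Fs 0. finite F" using reg[of 0] by (simp add: regular_family_def)
lemma th': "\<And>n. 1 \<le> n \<Longrightarrow> 0 \<le> \<theta> n \<and> \<theta> n \<le> 1" using theta_range by force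

lemma th_anti: assumes "1 \<le> a" "a \<le> b" shows "\<theta> b \<le> \<theta> a"
  using assms(2)
proof (induction b rule: dec_induct)
  case base then show ?case by simp
next
  case (step n) then show ?case using theta_noninc[of n] assms(1) by linarith
qed

lemma th_m: assumes "1 \<le> i" shows "\<theta> (m i) \<le> 2 * (1/2)^i"
  using assms
proof (induction i rule: nat_induct_at_least)
  case base
  have "m 1 > m 0" using m_mono by (simp add: strict_mono_def)
  then have "1 \<le> m 1" using m0 by simp
  then show ?case using theta_range[of "m 1"] by simp
next
  case (Suc i)
  then show ?case using m_theta[of i] by simp
qed

lemma th_block: assumes n: "1 \<le> n" and k: "k < block_index m n" shows "\<theta> n \<le> 2 * (1/2)^k"
proof (cases "k = 0")
  case True then show ?thesis using theta_range[OF n] by simp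
next
  case False
  have "\<not> n \<le> m k" using k unfolding block_index_def by (rule not_less_Least)
  moreover have "k \<le> m k" using m_mono by (rule strict_mono_imp_increasing)
  ultimately have "1 \<le> m k" "m k \<le> n" using False by auto
  then have "\<theta> n \<le> \<theta> (m k)" by (rule th_anti)
  also have "\<dots> \<le> 2 * (1/2)^k" using False th_m by simp
  finally show ?thesis .
qed

lemma a_sum: "finite S \<Longrightarrow> (\<Sum>k\<in>S. 2 * (1/2::real)^k) \<le> 4"
proof -
  assume S: "finite S"
  have "(\<Sum>k\<in>S. (1/2::real)^k) \<le> (\<Sum>k. (1/2::real)^k)"
    by (rule sum_le_suminf) (use S in \<open>auto intro: summable_geometric\<close>)
  also have "\<dots> = 2" by (simp add: suminf_geometric)
  finally show ?thesis by (simp add: sum_distrib_left[symmetric])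
qed

lemma G_adm_cases:
  assumes "admissible (G_fam Fs m n) Es"
  shows "admissible (Fs n) Es \<or> Es = [] \<or> (\<exists>E. Es = [E])"
proof -
  have p: "(\<forall>E\<in>set Es. finite E \<and> E \<noteq> {})" "sorted_wrt (\<lambda>A B. Max A < Min B) Es"
     "set (map Min Es) \<in> G_fam Fs m n" using adm_props[OF assms] by auto
  show ?thesis
  proof (cases "set (map Min Es) \<in> Fs n")
    case True then show ?thesis using p by (simp add: admissible_def)
  next
    case False
    then have "set (map Min Es) \<in> S0" using p(3) by (auto simp: G_fam_def)
    then show ?thesis using S0_list p(1,2) by blast
  qed
qed

lemma G_le_F: "x \<in> c00 \<Longrightarrow> mt_iter (Fs 0) \<theta> (G_fam Fs m) j x \<le> mt_iter (Fs 0) \<theta> Fs j x"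
proof (induction j arbitrary: x)
  case 0 then show ?case by simp
next
  case (Suc j)
  show ?case
  proof (rule mt_Suc_le[where \<theta>=\<theta>, OF fin0' th'])
    show "fam_norm (Fs 0) x \<le> mt_iter (Fs 0) \<theta> Fs (Suc j) x" by (rule fam_le_mt[where \<theta>=\<theta>, OF fin0' th'])
    show "0 \<le> mt_iter (Fs 0) \<theta> Fs (Suc j) x" by (rule mt_nonneg[where \<theta>=\<theta>, OF fin0' th' Suc.prems])
    fix n Es assume n: "1 \<le> n" and adm: "admissible (G_fam Fs m n) Es"
    have "\<theta> n * (\<Sum>E\<leftarrow>Es. mt_iter (Fs 0) \<theta> (G_fam Fs m) j (restr E x)) \<le> \<theta> n * (\<Sum>E\<leftarrow>Es. mt_iter (Fs 0) \<theta> Fs j (restr E x))"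
      using th'[OF n] by (intro mult_left_mono sum_list_mono Suc.IH restr_c00 Suc.prems) auto
    also have "\<dots> \<le> mt_iter (Fs 0) \<theta> Fs (Suc j) x"
      using G_adm_cases[OF adm]
    proof (elim disjE exE)
      assume "admissible (Fs n) Es"
      then show ?thesis using elem_le_Suc[where Fs=Fs and j=j, OF fin0' th' Suc.prems n] by simp
    next
      assume "Es = []" then show ?thesis using mt_nonneg[where \<theta>=\<theta>, OF fin0' th' Suc.prems] by simp
    next
      fix E assume E: "Es = [E]"
      have "\<theta> n * mt_iter (Fs 0) \<theta> Fs j (restr E x) \<le> mt_iter (Fs 0) \<theta> Fs j (restr E x)"
        using th'[OF n] mt_nonneg[where \<theta>=\<theta>, OF fin0' th' restr_c00[OF Suc.prems]] by (simp add: mult_left_le_one_le)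
      also have "\<dots> \<le> mt_iter (Fs 0) \<theta> Fs j x" by (rule mt_restr[where \<theta>=\<theta>, OF fin0' th' Suc.prems])
      also have "\<dots> \<le> mt_iter (Fs 0) \<theta> Fs (Suc j) x" by (rule mt_mono[where \<theta>=\<theta>, OF fin0' th' Suc.prems])
      finally show ?thesis using E by simp
    qed
    finally show "\<theta> n * (\<Sum>E\<leftarrow>Es. mt_iter (Fs 0) \<theta> (G_fam Fs m) j (restr E x)) \<le> mt_iter (Fs 0) \<theta> Fs (Suc j) x" .
  qed
qed

lemma G_adm_split:
  assumes adm: "admissible (Fs n) Es"
  shows "admissible (G_fam Fs m n) (map (\<lambda>E. E \<inter> {block_index m n..}) (filter (\<lambda>E. E \<inter> {block_index m n..} \<noteq> {}) Es))"
proof -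
  define Es' where "Es' = map (\<lambda>E. E \<inter> {block_index m n..}) (filter (\<lambda>E. E \<inter> {block_index m n..} \<noteq> {}) Es)"
  define c where "c = block_index m n"
  define H where "H = {c..}"
  define Es2 where "Es2 = filter (\<lambda>E. E \<inter> H \<noteq> {}) Es"
  have Es'_eq: "Es' = map (\<lambda>E. E \<inter> H) Es2" by (simp add: Es'_def Es2_def H_def c_def)
  have fin: "\<forall>E\<in>set Es. finite E \<and> E \<noteq> {}" and srt: "sorted_wrt (\<lambda>A B. Max A < Min B) Es"
    and mins: "set (map Min Es) \<in> Fs n" using adm_props[OF adm] by auto
  have Es2_sub: "set Es2 \<subseteq> set Es" by (auto simp: Es2_def)
  have srt2: "sorted_wrt (\<lambda>A B. Max A < Min B) Es2" by (simp add: Es2_def sorted_wrt_filter srt)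
  have ne2: "\<forall>E\<in>set Es2. finite E \<and> E \<inter> H \<noteq> {}" using fin by (auto simp: Es2_def)
  have finE': "\<forall>E\<in>set Es'. finite E \<and> E \<noteq> {}" using ne2 by (auto simp: Es'_eq)
  have srt': "sorted_wrt (\<lambda>A B. Max A < Min B) Es'"
    unfolding Es'_eq sorted_wrt_map
  proof (rule sorted_wrt_mono_rel[OF _ srt2])
    fix A B assume A: "A \<in> set Es2" and B: "B \<in> set Es2" and AB: "Max A < Min B"
    have "Max (A \<inter> H) \<le> Max A" using ne2 A by (intro Max_mono) auto
    moreover have "Min B \<le> Min (B \<inter> H)" using ne2 B by (intro Min_antimono) auto
    ultimately show "Max (A \<inter> H) < Min (B \<inter> H)" using AB by linarith
  qed
  have minmax: "Min A < Min B" if "finite A" "A \<noteq> {}" "Max A < Min B" for A B :: "nat set"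
    using that by (meson Max_ge Min_in order_le_less_trans)
  define ns where "ns = map Min Es2"
  define ms where "ms = map Min Es'"
  have sns: "sorted_wrt (<) ns" unfolding ns_def sorted_wrt_map
    by (rule sorted_wrt_mono_rel[OF _ srt2]) (use ne2 in \<open>fastforce intro: minmax\<close>)
  have sms: "sorted_wrt (<) ms" unfolding ms_def sorted_wrt_map
    by (rule sorted_wrt_mono_rel[OF _ srt']) (use finE' minmax in auto)
  have len: "length ns = length ms" by (simp add: ns_def ms_def Es'_eq)
  have pw: "\<forall>i<length ns. ns ! i \<le> ms ! i"
  proof (intro allI impI)
    fix i assume i: "i < length ns"
    then have "Es2 ! i \<in> set Es2" by (simp add: ns_def)
    then have "Min (Es2 ! i) \<le> Min (Es2 ! i \<inter> H)" using ne2 by (intro Min_antimono) auto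
    then show "ns ! i \<le> ms ! i" using i by (simp add: ns_def ms_def Es'_eq)
  qed
  have her: "hereditary (Fs n)" and spr: "spreading (Fs n)" using reg[of n] by (auto simp: regular_family_def)
  have "set ns \<subseteq> set (map Min Es)" using Es2_sub by (auto simp: ns_def)
  then have nsF: "set ns \<in> Fs n" using her mins by (auto simp: hereditary_def)
  have msF: "set ms \<in> Fs n" using spr sns sms len pw nsF unfolding spreading_def by blast
  have msc: "\<forall>i\<in>set ms. c \<le> i"
  proof
    fix i assume "i \<in> set ms"
    then obtain E where E: "E \<in> set Es2" "i = Min (E \<inter> H)" by (auto simp: ms_def Es'_eq)
    then have "i \<in> E \<inter> H" using ne2 by (metis Min_in finite_Int)
    then show "c \<le> i" by (simp add: H_def)
  qed
  have "admissible (G_fam Fs m n) Es'" using finE' srt' msF msc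
    by (auto simp: admissible_def G_fam_def c_def ms_def)
  then show ?thesis by (simp add: Es'_def)
qed

lemma F_le_G: "x \<in> c00 \<Longrightarrow> mt_iter (Fs 0) \<theta> Fs j x \<le>
    mt_iter (Fs 0) \<theta> (G_fam Fs m) j x + wsum (\<lambda>k. 2 * (1/2)^k) x"
proof (induction j arbitrary: x)
  case 0 then show ?case by (simp add: wsum_nonneg)
next
  case (Suc j)
  let ?W = "wsum (\<lambda>k. 2 * (1/2::real)^k)"
  let ?MF = "mt_iter (Fs 0) \<theta> Fs j"
  let ?MG = "mt_iter (Fs 0) \<theta> (G_fam Fs m) j"
  have Wnn: "0 \<le> ?W y" for y by (rule wsum_nonneg) simp
  show ?case
  proof (rule mt_Suc_le[where \<theta>=\<theta>, OF fin0' th'])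
    show "fam_norm (Fs 0) x \<le> mt_iter (Fs 0) \<theta> (G_fam Fs m) (Suc j) x + ?W x"
      using fam_le_mt[where Fs="G_fam Fs m" and j=j and x=x and \<theta>=\<theta>, OF fin0' th'] Wnn[of x] by linarith
    show "0 \<le> mt_iter (Fs 0) \<theta> (G_fam Fs m) (Suc j) x + ?W x"
      using mt_nonneg[where Fs="G_fam Fs m" and j="Suc j" and \<theta>=\<theta>, OF fin0' th' Suc.prems] Wnn[of x] by linarith
    fix n Es assume n: "1 \<le> n" and adm: "admissible (Fs n) Es"
    define c where "c = block_index m n"
    define L where "L = {..<c}"
    define H where "H = {c..}"
    define S where "S = supp x"
    have S: "finite S" "supp x \<subseteq> S" using Suc.prems by (auto simp: S_def c00_iff)
    define Es' where "Es' = map (\<lambda>E. E \<inter> H) (filter (\<lambda>E. E \<inter> H \<noteq> {}) Es)"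
    have admG: "admissible (G_fam Fs m n) Es'" using G_adm_split[OF adm] by (simp add: Es'_def H_def c_def)
    have fin: "\<forall>E\<in>set Es. finite E \<and> E \<noteq> {}" and srt: "sorted_wrt (\<lambda>A B. Max A < Min B) Es"
      using adm_props[OF adm] by auto
    have dis: "sorted_wrt (\<lambda>A B. A \<inter> B = {}) Es" using fin srt by (rule adm_disj)
    have dis': "sorted_wrt (\<lambda>A B. A \<inter> B = {}) Es'" using adm_props[OF admG] adm_disj by blast
    have rc: "restr E x \<in> c00" for E using Suc.prems by (rule restr_c00)
    have h1: "(\<Sum>E\<leftarrow>Es. ?MF (restr E x)) \<le> (\<Sum>E\<leftarrow>Es. ?MF (restr (E \<inter> L) x)) + (\<Sum>E\<leftarrow>Es. ?MF (restr (E \<inter> H) x))"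
    proof -
      have "(\<Sum>E\<leftarrow>Es. ?MF (restr E x)) \<le> (\<Sum>E\<leftarrow>Es. ?MF (restr (E \<inter> L) x) + ?MF (restr (E \<inter> H) x))"
      proof (rule sum_list_mono)
        fix E
        have "?MF (restr E x) = ?MF (\<lambda>k. restr (E \<inter> L) x k + restr (E \<inter> H) x k)"
          using restr_split[of E x c] by (simp add: L_def H_def)
        also have "\<dots> \<le> ?MF (restr (E \<inter> L) x) + ?MF (restr (E \<inter> H) x)"
          by (rule mt_add[where \<theta>=\<theta>, OF fin0' th' rc rc])
        finally show "?MF (restr E x) \<le> ?MF (restr (E \<inter> L) x) + ?MF (restr (E \<inter> H) x)" .
      qed
      then show ?thesis by (simp add: sum_list_addf)
    qed
    define A where "A = (\<Sum>k\<in>S \<inter> L. \<bar>x k\<bar>)"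
    have h2: "(\<Sum>E\<leftarrow>Es. ?MF (restr (E \<inter> L) x)) \<le> A"
    proof -
      have "(\<Sum>E\<leftarrow>Es. ?MF (restr (E \<inter> L) x)) \<le> (\<Sum>E\<leftarrow>Es. \<Sum>k\<in>(S \<inter> L) \<inter> E. \<bar>x k\<bar>)"
      proof (rule sum_list_mono)
        fix E
        have "?MF (restr (E \<inter> L) x) \<le> wsum (\<lambda>_. 1) (restr (E \<inter> L) x)"
          using mt_bound[where \<theta>=\<theta>, OF fin0' th' rc] by blast
        also have "\<dots> = (\<Sum>k\<in>S \<inter> (E \<inter> L). \<bar>x k\<bar>)" using wsum_restr[OF S] by simp
        also have "S \<inter> (E \<inter> L) = (S \<inter> L) \<inter> E" by auto
        finally show "?MF (restr (E \<inter> L) x) \<le> (\<Sum>k\<in>(S \<inter> L) \<inter> E. \<bar>x k\<bar>)" .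
      qed
      also have "\<dots> \<le> (\<Sum>k\<in>(S \<inter> L) \<inter> UNIV. \<bar>x k\<bar>)"
        by (rule sum_list_disj_le) (use S dis in auto)
      finally show ?thesis by (simp add: A_def)
    qed
    have h3: "(\<Sum>E\<leftarrow>Es. ?MF (restr (E \<inter> H) x)) = (\<Sum>E\<leftarrow>Es'. ?MF (restr E x))"
    proof -
      have "(\<Sum>E\<leftarrow>Es. ?MF (restr (E \<inter> H) x)) = (\<Sum>E\<leftarrow>filter (\<lambda>E. E \<inter> H \<noteq> {}) Es. ?MF (restr (E \<inter> H) x))"
        by (rule sum_list_filter0) (auto simp: restr_empty mt_zero[where \<theta>=\<theta>, OF fin0' th'])
      then show ?thesis by (simp add: Es'_def o_def)
    qed
    define B where "B = (\<Sum>E\<leftarrow>Es'. ?MG (restr E x))"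
    define C where "C = (\<Sum>E\<leftarrow>Es'. ?W (restr E x))"
    have h4: "(\<Sum>E\<leftarrow>Es'. ?MF (restr E x)) \<le> B + C"
    proof -
      have "(\<Sum>E\<leftarrow>Es'. ?MF (restr E x)) \<le> (\<Sum>E\<leftarrow>Es'. ?MG (restr E x) + ?W (restr E x))"
        by (rule sum_list_mono) (rule Suc.IH[OF rc])
      then show ?thesis by (simp add: sum_list_addf B_def C_def)
    qed
    define A' where "A' = (\<Sum>k\<in>S \<inter> L. 2 * (1/2::real)^k * \<bar>x k\<bar>)"
    define C0 where "C0 = (\<Sum>k\<in>S \<inter> H. 2 * (1/2::real)^k * \<bar>x k\<bar>)"
    have h5: "C \<le> C0"
    proof -
      have "C = (\<Sum>E\<leftarrow>Es'. \<Sum>k\<in>S \<inter> E. 2 * (1/2::real)^k * \<bar>x k\<bar>)"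
        unfolding C_def by (rule arg_cong[where f=sum_list], rule map_cong) (auto simp: wsum_restr[OF S])
      also have "\<dots> \<le> C0" unfolding C0_def
        by (rule sum_list_disj_le) (use S dis' in \<open>auto simp: Es'_def\<close>)
      finally show ?thesis .
    qed
    have h6: "\<theta> n * B \<le> mt_iter (Fs 0) \<theta> (G_fam Fs m) (Suc j) x"
      unfolding B_def using elem_le_Suc[where Fs="G_fam Fs m" and j=j, OF fin0' th' Suc.prems n admG] .
    have h7: "\<theta> n * A \<le> A'"
      unfolding A_def A'_def sum_distrib_left
    proof (rule sum_mono)
      fix k assume "k \<in> S \<inter> L"
      then have "\<theta> n \<le> 2 * (1/2)^k" using th_block[OF n] by (simp add: L_def c_def)
      then show "\<theta> n * \<bar>x k\<bar> \<le> 2 * (1/2)^k * \<bar>x k\<bar>" by (simp add: mult_right_mono)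
    qed
    have h8: "?W x = A' + C0"
    proof -
      have "?W x = (\<Sum>k\<in>S. 2 * (1/2::real)^k * \<bar>x k\<bar>)" by (rule wsum_eq[OF S])
      also have "S = (S \<inter> L) \<union> (S \<inter> H)" by (auto simp: L_def H_def)
      also have "(\<Sum>k\<in>(S \<inter> L) \<union> (S \<inter> H). 2 * (1/2::real)^k * \<bar>x k\<bar>) = A' + C0"
        unfolding A'_def C0_def using S(1) by (intro sum.union_disjoint) (auto simp: L_def H_def)
      finally show ?thesis .
    qed
    have Cnn: "0 \<le> C" unfolding C_def by (rule sum_list_nonneg) (auto intro: Wnn)
    have thn: "0 \<le> \<theta> n" "\<theta> n \<le> 1" using th'[OF n] by auto
    have tot: "(\<Sum>E\<leftarrow>Es. ?MF (restr E x)) \<le> A + (B + C)" using h1 h2 h3 h4 by linarith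
    have "\<theta> n * (\<Sum>E\<leftarrow>Es. ?MF (restr E x)) \<le> \<theta> n * (A + (B + C))"
      using tot thn(1) by (rule mult_left_mono)
    also have "\<dots> = \<theta> n * A + \<theta> n * B + \<theta> n * C" by algebra
    also have "\<theta> n * C \<le> C" using thn Cnn by (simp add: mult_left_le_one_le)
    then have "\<theta> n * A + \<theta> n * B + \<theta> n * C \<le> mt_iter (Fs 0) \<theta> (G_fam Fs m) (Suc j) x + ?W x"
      using h5 h6 h7 h8 by linarith
    finally show "\<theta> n * (\<Sum>E\<leftarrow>Es. ?MF (restr E x)) \<le> mt_iter (Fs 0) \<theta> (G_fam Fs m) (Suc j) x + ?W x" .
  qed
qed

lemma W_le: assumes x: "x \<in> c00"
  shows "wsum (\<lambda>k. 2 * (1/2)^k) x \<le> 4 * fam_norm (Fs 0) x"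
proof -
  have S: "finite (supp x)" using x by (simp add: c00_iff)
  have "wsum (\<lambda>k. 2 * (1/2)^k) x = (\<Sum>k\<in>supp x. 2 * (1/2::real)^k * \<bar>x k\<bar>)"
    by (simp add: wsum_def)
  also have "\<dots> \<le> (\<Sum>k\<in>supp x. 2 * (1/2::real)^k * fam_norm (Fs 0) x)"
    by (intro sum_mono mult_left_mono fam_single[OF fin0' x sing]) auto
  also have "\<dots> = (\<Sum>k\<in>supp x. 2 * (1/2::real)^k) * fam_norm (Fs 0) x"
    by (simp add: sum_distrib_right)
  also have "\<dots> \<le> 4 * fam_norm (Fs 0) x"
    by (intro mult_right_mono a_sum S fam_nonneg[OF fin0' x])
  finally show ?thesis .
qed

end

theorem proposition1:
  fixes Fs :: "nat \<Rightarrow> nat set set" and \<theta> :: "nat \<Rightarrow> real" and m :: "nat \<Rightarrow> nat"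
  assumes reg: "\<And>n. regular_family (Fs n)"
    and sing: "\<And>k. {k} \<in> Fs 0"
    and theta_range: "\<And>n. n \<ge> 1 \<Longrightarrow> 0 < \<theta> n \<and> \<theta> n < 1"
    and theta_noninc: "\<And>n. n \<ge> 1 \<Longrightarrow> \<theta> (Suc n) \<le> \<theta> n"
    and theta_null: "(\<lambda>n. \<theta> n) \<longlonglongrightarrow> 0"
    and m_mono: "strict_mono m"
    and m0: "m 0 = 0"
    and m_theta: "\<And>k. k \<ge> 1 \<Longrightarrow> \<theta> (m (Suc k)) \<le> \<theta> (m k) / 2"
  shows "\<exists>C>0. \<forall>x\<in>c00.
           mt_norm (Fs 0) \<theta> (G_fam Fs m) x \<le> C * mt_norm (Fs 0) \<theta> Fs x \<and>
           mt_norm (Fs 0) \<theta> Fs x \<le> C * mt_norm (Fs 0) \<theta> (G_fam Fs m) x"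
proof (intro exI[of _ 5] conjI ballI)
  note ctx = reg sing theta_range theta_noninc m_mono m0 m_theta
  have fin0: "\<forall>F\<in>Fs 0. finite F" by (rule fin0'[where Fs=Fs and \<theta>=\<theta> and m=m, OF ctx])
  have th: "\<And>n. 1 \<le> n \<Longrightarrow> 0 \<le> \<theta> n \<and> \<theta> n \<le> 1" by (rule th'[where Fs=Fs and \<theta>=\<theta> and m=m, OF ctx])
  fix x :: "nat \<Rightarrow> real" assume x: "x \<in> c00"
  let ?F = "\<lambda>j. mt_iter (Fs 0) \<theta> Fs j x"
  let ?G = "\<lambda>j. mt_iter (Fs 0) \<theta> (G_fam Fs m) j x"
  let ?W = "wsum (\<lambda>k. 2 * (1/2::real)^k) x"
  have bF: "bdd_above (range ?F)"
    by (rule bdd_aboveI2[of _ _ "wsum (\<lambda>_. 1) x"]) (use mt_bound[where \<theta>=\<theta>, OF fin0 th x] in blast)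
  have bG: "bdd_above (range ?G)"
    by (rule bdd_aboveI2[of _ _ "wsum (\<lambda>_. 1) x"]) (use mt_bound[where \<theta>=\<theta>, OF fin0 th x] in blast)
  have GF: "mt_norm (Fs 0) \<theta> (G_fam Fs m) x \<le> mt_norm (Fs 0) \<theta> Fs x"
    unfolding mt_norm_def
  proof (rule cSUP_least)
    fix j
    have "?G j \<le> ?F j" by (rule G_le_F[where Fs=Fs and \<theta>=\<theta> and m=m, OF ctx x])
    also have "\<dots> \<le> (SUP j. ?F j)" by (rule cSUP_upper[OF _ bF]) simp
    finally show "?G j \<le> (SUP j. ?F j)" .
  qed simp
  have FG: "mt_norm (Fs 0) \<theta> Fs x \<le> mt_norm (Fs 0) \<theta> (G_fam Fs m) x + ?W"
    unfolding mt_norm_def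
  proof (rule cSUP_least)
    fix j
    have "?F j \<le> ?G j + ?W" by (rule F_le_G[where Fs=Fs and \<theta>=\<theta> and m=m, OF ctx x])
    also have "?G j \<le> (SUP j. ?G j)" by (rule cSUP_upper[OF _ bG]) simp
    finally show "?F j \<le> (SUP j. ?G j) + ?W" by simp
  qed simp
  have Wle: "?W \<le> 4 * fam_norm (Fs 0) x" by (rule W_le[where Fs=Fs and \<theta>=\<theta> and m=m, OF ctx x])
  have "fam_norm (Fs 0) x \<le> ?G 1" using fam_le_mt[where Fs="G_fam Fs m" and j=0 and x=x and \<theta>=\<theta>, OF fin0 th] by simp
  also have "?G 1 \<le> mt_norm (Fs 0) \<theta> (G_fam Fs m) x"
    unfolding mt_norm_def by (rule cSUP_upper[OF _ bG]) simp
  finally have famG: "fam_norm (Fs 0) x \<le> mt_norm (Fs 0) \<theta> (G_fam Fs m) x" .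
  have "0 \<le> ?F 0" by simp
  also have "?F 0 \<le> mt_norm (Fs 0) \<theta> Fs x"
    unfolding mt_norm_def by (rule cSUP_upper[OF _ bF]) simp
  finally have Fnn: "0 \<le> mt_norm (Fs 0) \<theta> Fs x" .
  show "mt_norm (Fs 0) \<theta> (G_fam Fs m) x \<le> 5 * mt_norm (Fs 0) \<theta> Fs x" using GF Fnn by linarith
  show "mt_norm (Fs 0) \<theta> Fs x \<le> 5 * mt_norm (Fs 0) \<theta> (G_fam Fs m) x" using FG Wle famG by linarith
qed simp

end
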